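(* Let $n\ge 2$ and let $R$ be the complex Leibniz algebra with basis $\{h,e_1,\dots,e_n\}$ and nonzero products $[e_i,e_1]=e_{i+1}$ ($1\le i\le n-1$), $[h,e_1]=-e_1$, $[e_i,h]=ie_i$ ($1\le i\le n$). Then $(d,D)$ is a biderivation of $R$ iff there exist $\alpha_1,\alpha_2,\beta_3,\dots,\beta_{n+1}\in\mathbb C$ such that, with the convention $e_{n+1}=0$, $$d(h)=-\alpha_1e_1,\quad d(e_i)=i\alpha_2e_i+\alpha_1e_{i+1}\ (1\le i\le n),$$ $$D(h)=-\alpha_1e_1+\sum_{i=2}^{n-1}i\beta_{i+1}e_i+\beta_{n+1}e_n,\quad D(e_1)=\alpha_2e_1-\alpha_1e_2+\sum_{i=3}^n\beta_ie_i,\quad D(e_i)=0\ (2\le i\le n).$$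
   Context: Leibniz algebras are right Leibniz over $\mathbb C$: $[x,[y,z]]=[[x,y],z]-[[x,z],y]$. Unlisted products are zero. A derivation is a linear $d$ with $d([x,y])=[d(x),y]+[x,d(y)]$; an anti-derivation is a linear $D$ with $D([x,y])=[D(x),y]-[D(y),x]$; a biderivation is a pair $(d,D)$ of a derivation and an anti-derivation with $[x,d(y)]=[x,D(y)]$ for all $x,y$. *)

theory Defs
  imports Complex_Main
begin

text \<open>The Leibniz algebra R (dimension n+1) is modelled on coordinate vectors
  x :: nat \<Rightarrow> complex supported on {0..n}; coordinate 0 is h, coordinate i
  (1 \<le> i \<le> n) is e_i.\<close>

definition carR :: "nat \<Rightarrow> (nat \<Rightarrow> complex) set" where
  "carR n = {x. \<forall>k>n. x k = 0}"

definition bvec :: "nat \<Rightarrow> nat \<Rightarrow> complex" where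
  "bvec i = (\<lambda>k. if k = i then 1 else 0)"

text \<open>h, and e_i with the convention e_i = 0 for i outside 1..n (so e_(n+1) = 0).\<close>
definition hh :: "nat \<Rightarrow> complex" where "hh = bvec 0"

definition ee :: "nat \<Rightarrow> nat \<Rightarrow> nat \<Rightarrow> complex" where
  "ee n i = (if 1 \<le> i \<and> i \<le> n then bvec i else (\<lambda>k. 0))"

definition vadd :: "(nat \<Rightarrow> complex) \<Rightarrow> (nat \<Rightarrow> complex) \<Rightarrow> nat \<Rightarrow> complex" where
  "vadd x y = (\<lambda>k. x k + y k)"

definition vsub :: "(nat \<Rightarrow> complex) \<Rightarrow> (nat \<Rightarrow> complex) \<Rightarrow> nat \<Rightarrow> complex" where
  "vsub x y = (\<lambda>k. x k - y k)"

definition smul :: "complex \<Rightarrow> (nat \<Rightarrow> complex) \<Rightarrow> nat \<Rightarrow> complex" where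
  "smul c x = (\<lambda>k. c * x k)"

text \<open>Structure constants: [b_i, b_j] = sum_k sc n i j k b_k, with
  [e_i,e_1] = e_(i+1) (1 \<le> i \<le> n-1), [h,e_1] = -e_1, [e_i,h] = i e_i (1 \<le> i \<le> n).\<close>
definition sc :: "nat \<Rightarrow> nat \<Rightarrow> nat \<Rightarrow> nat \<Rightarrow> complex" where
  "sc n i j k =
     (if 1 \<le> i \<and> i \<le> n - 1 \<and> j = 1 \<and> k = i + 1 then 1
      else if i = 0 \<and> j = 1 \<and> k = 1 then -1
      else if 1 \<le> i \<and> i \<le> n \<and> j = 0 \<and> k = i then of_nat i
      else 0)"

definition brk :: "nat \<Rightarrow> (nat \<Rightarrow> complex) \<Rightarrow> (nat \<Rightarrow> complex) \<Rightarrow> nat \<Rightarrow> complex" where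
  "brk n x y = (\<lambda>k. \<Sum>i\<le>n. \<Sum>j\<le>n. x i * y j * sc n i j k)"

definition linear_endo :: "nat \<Rightarrow> ((nat \<Rightarrow> complex) \<Rightarrow> (nat \<Rightarrow> complex)) \<Rightarrow> bool" where
  "linear_endo n f \<longleftrightarrow> (\<forall>x\<in>carR n. f x \<in> carR n)
     \<and> (\<forall>x\<in>carR n. \<forall>y\<in>carR n. f (vadd x y) = vadd (f x) (f y))
     \<and> (\<forall>c. \<forall>x\<in>carR n. f (smul c x) = smul c (f x))"

definition is_derivation :: "nat \<Rightarrow> ((nat \<Rightarrow> complex) \<Rightarrow> (nat \<Rightarrow> complex)) \<Rightarrow> bool" where
  "is_derivation n d \<longleftrightarrow> linear_endo n d \<and>
     (\<forall>x\<in>carR n. \<forall>y\<in>carR n. d (brk n x y) = vadd (brk n (d x) y) (brk n x (d y)))"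

definition is_antiderivation :: "nat \<Rightarrow> ((nat \<Rightarrow> complex) \<Rightarrow> (nat \<Rightarrow> complex)) \<Rightarrow> bool" where
  "is_antiderivation n D \<longleftrightarrow> linear_endo n D \<and>
     (\<forall>x\<in>carR n. \<forall>y\<in>carR n. D (brk n x y) = vsub (brk n (D x) y) (brk n (D y) x))"

definition is_biderivation :: "nat \<Rightarrow> ((nat \<Rightarrow> complex) \<Rightarrow> (nat \<Rightarrow> complex))
    \<Rightarrow> ((nat \<Rightarrow> complex) \<Rightarrow> (nat \<Rightarrow> complex)) \<Rightarrow> bool" where
  "is_biderivation n d D \<longleftrightarrow> is_derivation n d \<and> is_antiderivation n D \<and>
     (\<forall>x\<in>carR n. \<forall>y\<in>carR n. brk n x (d y) = brk n x (D y))"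

end

theory Submission
  imports Defs
begin


definition L1 :: "nat \<Rightarrow> (nat \<Rightarrow> complex) \<Rightarrow> nat \<Rightarrow> complex" where
  "L1 n x = (\<lambda>k. if k = 1 then - x 0 else if 2 \<le> k \<and> k \<le> n then x (k - 1) else 0)"
definition Lh :: "nat \<Rightarrow> (nat \<Rightarrow> complex) \<Rightarrow> nat \<Rightarrow> complex" where
  "Lh n x = (\<lambda>k. if 1 \<le> k \<and> k \<le> n then of_nat k * x k else 0)"

lemma inner_sum:
  assumes "1 \<le> n"
  shows "(\<Sum>j\<le>n. x i * y j * sc n i j k) = x i * y 0 * sc n i 0 k + x i * y 1 * sc n i 1 k"
proof -
  have "{..n} = insert 0 (insert 1 {2..n})" using assms by auto
  moreover have "(\<Sum>j\<in>{2..n}. x i * y j * sc n i j k) = 0" by (rule sum.neutral) (auto simp: sc_def)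
  ultimately show ?thesis by simp
qed

lemma brk_closed:
  assumes "1 \<le> n"
  shows "brk n x y = (\<lambda>k. y 1 * L1 n x k + y 0 * Lh n x k)"
proof
  fix k
  have "brk n x y k = (\<Sum>i\<le>n. x i * y 0 * sc n i 0 k + x i * y 1 * sc n i 1 k)"
    unfolding brk_def using inner_sum[OF assms] by simp
  also have "\<dots> = (\<Sum>i\<le>n. x i * y 0 * sc n i 0 k) + (\<Sum>i\<le>n. x i * y 1 * sc n i 1 k)"
    by (simp add: sum.distrib)
  also have "(\<Sum>i\<le>n. x i * y 0 * sc n i 0 k) = (\<Sum>i\<le>n. if i = k then (if 1 \<le> k \<and> k \<le> n then y 0 * (of_nat k * x k) else 0) else 0)"
    by (rule sum.cong) (auto simp: sc_def)
  also have "\<dots> = y 0 * Lh n x k"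
    by (cases "k \<le> n") (auto simp: Lh_def sum.delta)
  also have "(\<Sum>i\<le>n. x i * y 1 * sc n i 1 k) = (\<Sum>i\<le>n. (if i = 0 then (if k = 1 then - y 1 * x 0 else 0) else 0)
       + (if i = k - 1 then (if 2 \<le> k \<and> k \<le> n then y 1 * x (k - 1) else 0) else 0))"
    by (rule sum.cong) (auto simp: sc_def)
  also have "\<dots> = y 1 * L1 n x k"
    by (cases "k \<le> n") (auto simp: L1_def sum.distrib sum.delta)
  finally show "brk n x y k = y 1 * L1 n x k + y 0 * Lh n x k" by simp
qed

lemma bvec_car: "i \<le> n \<Longrightarrow> bvec i \<in> carR n"
  by (auto simp: carR_def bvec_def)

lemma zero_car: "(\<lambda>k. 0) \<in> carR n" by (simp add: carR_def)

lemma lin_zero: "linear_endo n f \<Longrightarrow> f (\<lambda>k. 0) = (\<lambda>k. 0)"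
proof -
  assume l: "linear_endo n f"
  have "f (smul 0 (\<lambda>k. 0)) = smul 0 (f (\<lambda>k. 0))" using l zero_car unfolding linear_endo_def by blast
  moreover have "smul 0 (\<lambda>k. 0) = (\<lambda>k. 0 :: complex)" by (simp add: smul_def)
  ultimately show ?thesis by (simp add: smul_def)
qed

lemma lin_smul_b: "linear_endo n f \<Longrightarrow> i \<le> n \<Longrightarrow> f (smul c (bvec i)) = smul c (f (bvec i))"
  using bvec_car unfolding linear_endo_def by blast

lemma lin_expand:
  assumes l: "linear_endo n f" and x: "x \<in> carR n"
  shows "f x = (\<lambda>k. \<Sum>i\<le>n. x i * f (bvec i) k)"
proof -
  define P where "P m = (\<lambda>k. if k \<le> m then x k else 0)" for m
  have Pc: "P m \<in> carR n" if "m \<le> n" for m using that by (auto simp: P_def carR_def)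
  have "m \<le> n \<Longrightarrow> f (P m) = (\<lambda>k. \<Sum>i\<le>m. x i * f (bvec i) k)" for m
  proof (induction m)
    case 0
    have "P 0 = smul (x 0) (bvec 0)" by (auto simp: P_def smul_def bvec_def)
    then show ?case using lin_smul_b[OF l, of 0] by (simp add: smul_def)
  next
    case (Suc m)
    have "P (Suc m) = vadd (P m) (smul (x (Suc m)) (bvec (Suc m)))"
      by (rule ext) (auto simp: P_def smul_def bvec_def vadd_def le_Suc_eq)
    moreover have "smul (x (Suc m)) (bvec (Suc m)) \<in> carR n" using Suc.prems by (auto simp: carR_def smul_def bvec_def)
    ultimately have "f (P (Suc m)) = vadd (f (P m)) (f (smul (x (Suc m)) (bvec (Suc m))))"
      using l Pc[of m] Suc.prems unfolding linear_endo_def by auto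
    then show ?case using Suc lin_smul_b[OF l Suc.prems] by (simp add: vadd_def smul_def)
  qed
  moreover have "P n = x" using x by (auto simp: P_def carR_def)
  ultimately show ?thesis by auto
qed

lemma lin_eq:
  assumes "linear_endo n f" "linear_endo n g" "\<And>i. i \<le> n \<Longrightarrow> f (bvec i) = g (bvec i)" "x \<in> carR n"
  shows "f x = g x"
  using lin_expand[OF assms(1,4)] lin_expand[OF assms(2,4)] assms(3) by simp

lemma Lh_bvec: "i \<le> n \<Longrightarrow> Lh n (bvec i) = smul (of_nat i) (bvec i)"
  by (auto simp: Lh_def smul_def bvec_def)

lemma L1_bvec0: "1 \<le> n \<Longrightarrow> L1 n (bvec 0) = smul (-1) (bvec 1)"
  by (auto simp: L1_def smul_def bvec_def)

lemma L1_bvec: "1 \<le> i \<Longrightarrow> i < n \<Longrightarrow> L1 n (bvec i) = bvec (Suc i)"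
  by (rule ext) (auto simp: L1_def bvec_def)

lemma L1_bvecn: "1 \<le> n \<Longrightarrow> L1 n (bvec n) = (\<lambda>k. 0)"
  by (rule ext) (auto simp: L1_def bvec_def)

lemma ee_b: "1 \<le> i \<Longrightarrow> i \<le> n \<Longrightarrow> ee n i = bvec i" by (simp add: ee_def)

lemma sum_ee: "(\<Sum>i\<in>S. f i * ee n i k) = (if k \<in> S \<and> 1 \<le> k \<and> k \<le> n \<and> finite S then f k else 0)"
proof -
  have "(\<Sum>i\<in>S. f i * ee n i k) = (\<Sum>i\<in>S. if i = k then (if 1 \<le> k \<and> k \<le> n then f k else 0) else 0)"
    by (rule sum.cong) (auto simp: ee_def bvec_def)
  then show ?thesis by (cases "finite S") (auto simp: sum.delta)
qed

lemma brk_car: "1 \<le> n \<Longrightarrow> brk n x y \<in> carR n"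
  by (simp add: brk_closed carR_def L1_def Lh_def)

definition gd :: "nat \<Rightarrow> complex \<Rightarrow> complex \<Rightarrow> (nat \<Rightarrow> complex) \<Rightarrow> nat \<Rightarrow> complex" where
  "gd n a1 a2 x = (\<lambda>k. a2 * Lh n x k + a1 * L1 n x k)"

definition gD :: "(nat \<Rightarrow> complex) \<Rightarrow> (nat \<Rightarrow> complex) \<Rightarrow> (nat \<Rightarrow> complex) \<Rightarrow> nat \<Rightarrow> complex" where
  "gD P Q x = (\<lambda>k. x 0 * P k + x 1 * Q k)"

lemma gd_lin: "2 \<le> n \<Longrightarrow> linear_endo n (gd n a1 a2)"
  unfolding linear_endo_def gd_def carR_def vadd_def smul_def L1_def Lh_def
  by (auto simp: algebra_simps)

lemma gD_lin: "P \<in> carR n \<Longrightarrow> Q \<in> carR n \<Longrightarrow> linear_endo n (gD P Q)"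
  unfolding linear_endo_def gD_def carR_def vadd_def smul_def
  by (auto simp: algebra_simps)

lemma der_gd: "2 \<le> n \<Longrightarrow> x \<in> carR n \<Longrightarrow> y \<in> carR n \<Longrightarrow>
  gd n a1 a2 (brk n x y) = vadd (brk n (gd n a1 a2 x) y) (brk n x (gd n a1 a2 y))"
  apply (rule ext)
  apply (simp add: brk_closed gd_def vadd_def L1_def Lh_def)
  apply (auto simp: algebra_simps of_nat_diff)
  done

lemma anti_gD:
  assumes "2 \<le> n" "P \<in> carR n" "Q \<in> carR n" "P 0 = 0" "Q 0 = 0"
    "\<And>k. 2 \<le> k \<Longrightarrow> k \<le> n \<Longrightarrow> of_nat (k - 1) * Q k = P (k - 1)"
  shows "gD P Q (brk n x y) = vsub (brk n (gD P Q x) y) (brk n (gD P Q y) x)"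
proof (rule ext)
  fix k
  show "gD P Q (brk n x y) k = vsub (brk n (gD P Q x) y) (brk n (gD P Q y) x) k"
  proof (cases "2 \<le> k \<and> k \<le> n")
    case True
    then have "of_nat k * Q k = Q k + P (k - 1)" using assms(6)[of k] by (simp add: of_nat_diff algebra_simps)
    then have e: "of_nat k * (Q k * z) = Q k * z + P (k - 1) * z" for z by (simp add: algebra_simps)
    show ?thesis using True assms(1,4,5)
      by (simp add: brk_closed gD_def vsub_def L1_def Lh_def algebra_simps e)
  next
    case False
    then have "k = 0 \<or> k = 1 \<or> k > n" by auto
    then show ?thesis using assms(1-5)
      by (auto simp: brk_closed gD_def vsub_def L1_def Lh_def algebra_simps carR_def)
  qed
qed

lemma backward:
  assumes n2: "2 \<le> n" and ld: "linear_endo n d" and lD: "linear_endo n D"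
  and h1: "d hh = smul (- \<alpha>1) (ee n 1)"
  and h2: "\<forall>i\<in>{1..n}. d (ee n i) = vadd (smul (of_nat i * \<alpha>2) (ee n i)) (smul \<alpha>1 (ee n (i + 1)))"
  and h3: "D hh = vadd (vadd (smul (- \<alpha>1) (ee n 1))
                      (\<lambda>k. \<Sum>i=2..n-1. of_nat i * \<beta> (i + 1) * ee n i k))
                (smul (\<beta> (n + 1)) (ee n n))"
  and h4: "D (ee n 1) = vadd (vadd (smul \<alpha>2 (ee n 1)) (smul (- \<alpha>1) (ee n 2)))
                      (\<lambda>k. \<Sum>i=3..n. \<beta> i * ee n i k)"
  and h5: "\<forall>i\<in>{2..n}. D (ee n i) = (\<lambda>k. 0)"
  shows "is_biderivation n d D"
proof -
  define P where "P = D hh"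
  define Q where "Q = D (bvec 1)"
  have Q': "Q = D (ee n 1)" using n2 by (simp add: Q_def ee_def)
  have Pk: "P k = (if k = 1 then -\<alpha>1 else if 2 \<le> k \<and> k \<le> n-1 then of_nat k * \<beta>(k+1) else if k = n then \<beta>(n+1) else 0)" for k
    unfolding P_def h3 vadd_def smul_def sum_ee using n2 by (auto simp: ee_def bvec_def)
  have Qk: "Q k = (if k = 1 then \<alpha>2 else if k = 2 then -\<alpha>1 else if 3 \<le> k \<and> k \<le> n then \<beta> k else 0)" for k
    unfolding Q' h4 vadd_def smul_def sum_ee using n2 by (auto simp: ee_def bvec_def)
  have Pc: "P \<in> carR n" "Q \<in> carR n" using lD bvec_car[of 0 n] bvec_car[of 1 n] n2
    unfolding P_def Q_def hh_def linear_endo_def by auto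
  have dd: "d x = gd n \<alpha>1 \<alpha>2 x" if "x \<in> carR n" for x
  proof (rule lin_eq[OF ld gd_lin[OF n2] _ that])
    fix i assume i: "i \<le> n"
    show "d (bvec i) = gd n \<alpha>1 \<alpha>2 (bvec i)"
    proof (cases "i = 0")
      case True
      then show ?thesis using h1 n2 unfolding hh_def
        by (auto simp: gd_def Lh_def L1_def bvec_def ee_def smul_def)
    next
      case False
      then have "d (ee n i) = vadd (smul (of_nat i * \<alpha>2) (ee n i)) (smul \<alpha>1 (ee n (i + 1)))"
        using h2 i by auto
      then have "d (bvec i) = vadd (smul (of_nat i * \<alpha>2) (ee n i)) (smul \<alpha>1 (ee n (i + 1)))"
        using i False ee_b[of i n] by simp
      then show ?thesis using False i
        by (intro ext) (auto simp: gd_def Lh_def L1_def bvec_def ee_def smul_def vadd_def)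
    qed
  qed
  have DD: "D x = gD P Q x" if "x \<in> carR n" for x
  proof (rule lin_eq[OF lD gD_lin[OF Pc] _ that])
    fix i assume i: "i \<le> n"
    show "D (bvec i) = gD P Q (bvec i)"
    proof (cases "i \<le> 1")
      case True
      then have "i = 0 \<or> i = 1" by auto
      then show ?thesis unfolding P_def Q_def hh_def
        by (auto simp: gD_def bvec_def)
    next
      case False
      then have "D (ee n i) = (\<lambda>k. 0)"
        using h5 i by auto
      then have "D (bvec i) = (\<lambda>k. 0)"
        using i False ee_b[of i n] by simp
      then show ?thesis using False
        by (auto simp: gD_def bvec_def)
    qed
  qed
  have key: "of_nat (k - 1) * Q k = P (k - 1)" if "2 \<le> k" "k \<le> n" for k
  proof (cases "k = 2")
    case True then show ?thesis using Pk Qk n2 by simp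
  next
    case False
    then have "3 \<le> k" using that by auto
    then show ?thesis using Pk[of "k - 1"] Qk[of k] that by auto
  qed
  have P0: "P 0 = 0" "Q 0 = 0" using Pk Qk n2 by auto
  have der: "d (brk n x y) = vadd (brk n (d x) y) (brk n x (d y))" if "x \<in> carR n" "y \<in> carR n" for x y
    using dd that brk_car[of n x y] n2 der_gd[OF n2 that] by simp
  have anti: "D (brk n x y) = vsub (brk n (D x) y) (brk n (D y) x)" if "x \<in> carR n" "y \<in> carR n" for x y
    using DD that brk_car[of n x y] n2 anti_gD[OF n2 Pc P0 key] by simp
  have bi: "brk n x (d y) = brk n x (D y)" if "x \<in> carR n" "y \<in> carR n" for x y
  proof -
    have "d y 0 = D y 0" "d y 1 = D y 1" using dd DD that Pk Qk n2
      by (auto simp: gd_def gD_def Lh_def L1_def)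
    then show ?thesis using n2 by (simp add: brk_closed)
  qed
  show ?thesis unfolding is_biderivation_def is_derivation_def is_antiderivation_def
    using ld lD der anti bi by blast
qed

lemma brk_b0: "1 \<le> n \<Longrightarrow> brk n x (bvec 0) = Lh n x"
  by (simp add: brk_closed bvec_def)
lemma brk_b1: "1 \<le> n \<Longrightarrow> brk n x (bvec 1) = L1 n x"
  by (simp add: brk_closed bvec_def)

lemma bvec_app: "bvec i j = (if j = i then 1 else 0)" by (simp add: bvec_def)

lemma forward:
  assumes n2: "2 \<le> n" and bd: "is_biderivation n d D"
  shows "\<exists>\<alpha>1 \<alpha>2 :: complex. \<exists>\<beta> :: nat \<Rightarrow> complex.
       d hh = smul (- \<alpha>1) (ee n 1)
     \<and> (\<forall>i\<in>{1..n}. d (ee n i) = vadd (smul (of_nat i * \<alpha>2) (ee n i)) (smul \<alpha>1 (ee n (i + 1))))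
     \<and> D hh = vadd (vadd (smul (- \<alpha>1) (ee n 1))
                      (\<lambda>k. \<Sum>i=2..n-1. of_nat i * \<beta> (i + 1) * ee n i k))
                (smul (\<beta> (n + 1)) (ee n n))
     \<and> D (ee n 1) = vadd (vadd (smul \<alpha>2 (ee n 1)) (smul (- \<alpha>1) (ee n 2)))
                      (\<lambda>k. \<Sum>i=3..n. \<beta> i * ee n i k)
     \<and> (\<forall>i\<in>{2..n}. D (ee n i) = (\<lambda>k. 0))"
proof -
  have ld: "linear_endo n d" and lD: "linear_endo n D"
    and der: "\<And>x y. x \<in> carR n \<Longrightarrow> y \<in> carR n \<Longrightarrow> d (brk n x y) = vadd (brk n (d x) y) (brk n x (d y))"
    and anti: "\<And>x y. x \<in> carR n \<Longrightarrow> y \<in> carR n \<Longrightarrow> D (brk n x y) = vsub (brk n (D x) y) (brk n (D y) x)"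
    and bi: "\<And>x y. x \<in> carR n \<Longrightarrow> y \<in> carR n \<Longrightarrow> brk n x (d y) = brk n x (D y)"
    using bd unfolding is_biderivation_def is_derivation_def is_antiderivation_def by auto
  have n1: "1 \<le> n" using n2 by simp
  have dcar: "d (bvec i) k = 0" "D (bvec i) k = 0" if "i \<le> n" "n < k" for i k
    using ld lD bvec_car[OF that(1)] that(2) unfolding linear_endo_def carR_def by auto
  have F1: "0 = Lh n (d (bvec 0)) k + (d (bvec 0) 1 * L1 n (bvec 0) k + d (bvec 0) 0 * Lh n (bvec 0) k)" for k
  proof -
    have "d (brk n (bvec 0) (bvec 0)) = vadd (brk n (d (bvec 0)) (bvec 0)) (brk n (bvec 0) (d (bvec 0)))"
      using der bvec_car[of 0 n] by simp
    moreover have "d (brk n (bvec 0) (bvec 0)) = (\<lambda>k. 0)"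
      using brk_b0[OF n1] Lh_bvec[of 0 n] lin_smul_b[OF ld, of 0 0] lin_zero[OF ld] by (simp add: smul_def)
    ultimately have "vadd (Lh n (d (bvec 0))) (brk n (bvec 0) (d (bvec 0))) = (\<lambda>k. 0)" using brk_b0[OF n1] by simp
    then show ?thesis using n1 by (simp add: vadd_def brk_closed fun_eq_iff)
  qed
  have F2: "of_nat i * d (bvec i) k = Lh n (d (bvec i)) k + (d (bvec 0) 1 * L1 n (bvec i) k + d (bvec 0) 0 * Lh n (bvec i) k)"
    if "i \<le> n" for i k
  proof -
    have "d (brk n (bvec i) (bvec 0)) = vadd (brk n (d (bvec i)) (bvec 0)) (brk n (bvec i) (d (bvec 0)))"
      using der bvec_car[of 0 n] bvec_car[OF that] by simp
    moreover have "d (brk n (bvec i) (bvec 0)) = smul (of_nat i) (d (bvec i))"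
      using brk_b0[OF n1] Lh_bvec[OF that] lin_smul_b[OF ld that] by simp
    ultimately have "vadd (Lh n (d (bvec i))) (brk n (bvec i) (d (bvec 0))) = smul (of_nat i) (d (bvec i))" using brk_b0[OF n1] by simp
    then show ?thesis using n1 by (simp add: vadd_def smul_def brk_closed fun_eq_iff)
  qed
  have F3: "d (bvec (Suc i)) k = L1 n (d (bvec i)) k + (d (bvec 1) 1 * L1 n (bvec i) k + d (bvec 1) 0 * Lh n (bvec i) k)"
    if "1 \<le> i" "i < n" for i k
  proof -
    have "d (brk n (bvec i) (bvec 1)) = vadd (brk n (d (bvec i)) (bvec 1)) (brk n (bvec i) (d (bvec 1)))"
      using der bvec_car[of 1 n] bvec_car[of i n] that n1 by simp
    moreover have "brk n (bvec i) (bvec 1) = bvec (Suc i)"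
      using brk_b1[OF n1] L1_bvec[OF that] by simp
    ultimately have "vadd (L1 n (d (bvec i))) (brk n (bvec i) (d (bvec 1))) = d (bvec (Suc i))" using brk_b1[OF n1] by simp
    then show ?thesis using n1 by (simp add: vadd_def brk_closed fun_eq_iff)
  qed
  have G2: "of_nat i * D (bvec i) k = Lh n (D (bvec i)) k - (bvec i 1 * L1 n (D (bvec 0)) k + bvec i 0 * Lh n (D (bvec 0)) k)"
    if "i \<le> n" for i k
  proof -
    have "D (brk n (bvec i) (bvec 0)) = vsub (brk n (D (bvec i)) (bvec 0)) (brk n (D (bvec 0)) (bvec i))"
      using anti bvec_car[of 0 n] bvec_car[OF that] by simp
    moreover have "D (brk n (bvec i) (bvec 0)) = smul (of_nat i) (D (bvec i))"
      using brk_b0[OF n1] Lh_bvec[OF that] lin_smul_b[OF lD that] by simp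
    ultimately have "vsub (Lh n (D (bvec i))) (brk n (D (bvec 0)) (bvec i)) = smul (of_nat i) (D (bvec i))" using brk_b0[OF n1] by simp
    then show ?thesis using n1 by (simp add: vsub_def smul_def brk_closed fun_eq_iff)
  qed
  have G3: "D (bvec (Suc i)) k = L1 n (D (bvec i)) k - (bvec i 1 * L1 n (D (bvec 1)) k + bvec i 0 * Lh n (D (bvec 1)) k)"
    if "1 \<le> i" "i < n" for i k
  proof -
    have "D (brk n (bvec i) (bvec 1)) = vsub (brk n (D (bvec i)) (bvec 1)) (brk n (D (bvec 1)) (bvec i))"
      using anti bvec_car[of 1 n] bvec_car[of i n] that n1 by simp
    moreover have "brk n (bvec i) (bvec 1) = bvec (Suc i)"
      using brk_b1[OF n1] L1_bvec[OF that] by simp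
    ultimately have "vsub (L1 n (D (bvec i))) (brk n (D (bvec 1)) (bvec i)) = D (bvec (Suc i))" using brk_b1[OF n1] by simp
    then show ?thesis using n1 by (simp add: vsub_def brk_closed fun_eq_iff)
  qed
  have H: "d y 0 = D y 0" "d y 1 = D y 1" if "y \<in> carR n" for y
  proof -
    have "brk n (bvec 0) (d y) 1 = brk n (bvec 0) (D y) 1" using bi bvec_car[of 0 n] that by simp
    then show "d y 1 = D y 1" using n1 by (simp add: brk_closed L1_def Lh_def bvec_app)
    have "brk n (bvec n) (d y) n = brk n (bvec n) (D y) n" using bi bvec_car[of n n] that by simp
    moreover have "n - Suc 0 \<noteq> n" using n2 by simp
    ultimately show "d y 0 = D y 0" using n2 by (simp add: brk_closed L1_def Lh_def bvec_app)
  qed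
  have a: "d (bvec 0) 0 = 0" using F2[of 1 1] n2 by (simp add: L1_def Lh_def bvec_app)
  have b: "d (bvec i) 0 = 0" if "1 \<le> i" "i \<le> n" for i using F2[of i 0] that by (simp add: L1_def Lh_def)
  have c: "d (bvec i) k = 0" if "1 \<le> i" "i \<le> n" "1 \<le> k" "k \<le> n" "k \<noteq> i" "k \<noteq> Suc i" for i k
  proof -
    have "k - 1 \<noteq> i" using that by auto
    then have "of_nat i * d (bvec i) k = of_nat k * d (bvec i) k" using F2[of i k] that by (simp add: L1_def Lh_def bvec_app)
    then show ?thesis using that by simp
  qed
  have dd: "d (bvec i) (Suc i) = - d (bvec 0) 1" if "1 \<le> i" "i < n" for i
  proof -
    have "d (bvec 0) 1 + d (bvec i) (Suc i) = 0" using F2[of i "Suc i"] that by (simp add: L1_def Lh_def bvec_app algebra_simps)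
    then show ?thesis by (simp add: eq_neg_iff_add_eq_0 add.commute)
  qed
  have e: "d (bvec i) i = of_nat i * d (bvec 1) 1" if "1 \<le> i" "i \<le> n" for i
    using that
  proof (induction i)
    case 0 then show ?case by simp
  next
    case (Suc i)
    show ?case
    proof (cases "i = 0")
      case True then show ?thesis by simp
    next
      case False
      then have "d (bvec (Suc i)) (Suc i) = d (bvec i) i + d (bvec 1) 1"
        using F3[of i "Suc i"] Suc.prems a b[of 1] n2 by (simp add: L1_def Lh_def bvec_app)
      then show ?thesis using Suc False by (simp add: algebra_simps)
    qed
  qed
  have f: "d (bvec 0) k = 0" if "2 \<le> k" "k \<le> n" for k using F1[of k] that by (simp add: L1_def Lh_def bvec_app)
  have hD: "D (bvec i) k = 0" if "2 \<le> i" "i \<le> n" "1 \<le> k" "k \<le> n" "k \<noteq> i" for i k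
    using G2[of i k] that by (simp add: L1_def Lh_def bvec_app)
  have iD: "D (bvec 0) (k - 1) = of_nat (k - 1) * D (bvec 1) k" if "2 \<le> k" "k \<le> n" for k
    using G2[of 1 k] that by (simp add: L1_def Lh_def bvec_app of_nat_diff algebra_simps)
  have kD: "D (bvec i) i = 0" if "2 \<le> i" "i \<le> n" for i
    using that
  proof (induction i)
    case 0 then show ?case by simp
  next
    case (Suc i)
    show ?case
    proof (cases "i = 1")
      case True
      have "D (bvec 2) 2 = 0" using G3[of 1 2] n2 by (simp add: L1_def Lh_def bvec_app numeral_2_eq_2)
      then show ?thesis using True by (simp add: numeral_2_eq_2)
    next
      case False
      then have "D (bvec (Suc i)) (Suc i) = D (bvec i) i"
        using G3[of i "Suc i"] Suc.prems by (simp add: L1_def Lh_def bvec_app)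
      then show ?thesis using Suc False by simp
    qed
  qed
  have HD: "D (bvec i) 0 = d (bvec i) 0" "D (bvec i) 1 = d (bvec i) 1" if "i \<le> n" for i
    using H[OF bvec_car[OF that]] by auto
  define \<alpha>1 where "\<alpha>1 = - d (bvec 0) 1"
  define \<alpha>2 where "\<alpha>2 = d (bvec 1) 1"
  define \<beta> where "\<beta> = (\<lambda>j. if j = n + 1 then D (bvec 0) n else D (bvec 1) j)"
  have ee1: "ee n 1 = bvec 1" using n2 by (simp add: ee_def)
  have P1: "d hh = smul (- \<alpha>1) (ee n 1)"
  proof (rule ext)
    fix k
    consider "k = 0" | "k = 1" | "2 \<le> k \<and> k \<le> n" | "n < k" by linarith
    then show "d hh k = smul (- \<alpha>1) (ee n 1) k"
      by cases (use a f dcar[of 0 k] n2 in \<open>auto simp: hh_def ee_def smul_def bvec_app \<alpha>1_def\<close>)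
  qed
  have P2: "\<forall>i\<in>{1..n}. d (ee n i) = vadd (smul (of_nat i * \<alpha>2) (ee n i)) (smul \<alpha>1 (ee n (i + 1)))"
  proof
    fix i assume i: "i \<in> {1..n}"
    show "d (ee n i) = vadd (smul (of_nat i * \<alpha>2) (ee n i)) (smul \<alpha>1 (ee n (i + 1)))"
    proof (rule ext)
      fix k
      consider "k = 0" | "k = i" | "k = Suc i \<and> k \<le> n" | "1 \<le> k \<and> k \<le> n \<and> k \<noteq> i \<and> k \<noteq> Suc i" | "n < k" by linarith
      then show "d (ee n i) k = vadd (smul (of_nat i * \<alpha>2) (ee n i)) (smul \<alpha>1 (ee n (i + 1))) k"
      proof cases
        case 1 then show ?thesis using i b[of i] by (auto simp: ee_def vadd_def smul_def bvec_app)
      next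
        case 2 then show ?thesis using i e[of i] by (auto simp: ee_def vadd_def smul_def bvec_app \<alpha>2_def)
      next
        case 3 then show ?thesis using i dd[of i] by (auto simp: ee_def vadd_def smul_def bvec_app \<alpha>1_def)
      next
        case 4 then show ?thesis using i c[of i k] by (auto simp: ee_def vadd_def smul_def bvec_app)
      next
        case 5 then show ?thesis using i dcar[of i k] by (auto simp: ee_def vadd_def smul_def bvec_app)
      qed
    qed
  qed
  have P3: "D hh = vadd (vadd (smul (- \<alpha>1) (ee n 1))
                      (\<lambda>k. \<Sum>i=2..n-1. of_nat i * \<beta> (i + 1) * ee n i k))
                (smul (\<beta> (n + 1)) (ee n n))"
  proof (rule ext)
    fix k
    consider "k = 0" | "k = 1" | "2 \<le> k \<and> k \<le> n - 1" | "k = n" | "n < k" by linarith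
    then show "D hh k = vadd (vadd (smul (- \<alpha>1) (ee n 1))
                      (\<lambda>k. \<Sum>i=2..n-1. of_nat i * \<beta> (i + 1) * ee n i k))
                (smul (\<beta> (n + 1)) (ee n n)) k"
    proof cases
      case 1 then show ?thesis using HD[of 0] a n2 unfolding vadd_def smul_def sum_ee by (auto simp: hh_def ee_def bvec_app)
    next
      case 2 then show ?thesis using HD[of 0] n2 unfolding vadd_def smul_def sum_ee by (auto simp: hh_def ee_def bvec_app \<alpha>1_def)
    next
      case 3 then show ?thesis using iD[of "Suc k"] n2 unfolding vadd_def smul_def sum_ee by (auto simp: hh_def ee_def bvec_app \<beta>_def)
    next
      case 4 then show ?thesis using n2 unfolding vadd_def smul_def sum_ee by (auto simp: hh_def ee_def bvec_app \<beta>_def)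
    next
      case 5 then show ?thesis using dcar[of 0 k] n2 unfolding vadd_def smul_def sum_ee by (auto simp: hh_def ee_def bvec_app)
    qed
  qed
  have P4: "D (ee n 1) = vadd (vadd (smul \<alpha>2 (ee n 1)) (smul (- \<alpha>1) (ee n 2)))
                      (\<lambda>k. \<Sum>i=3..n. \<beta> i * ee n i k)"
  proof (rule ext)
    fix k
    consider "k = 0" | "k = 1" | "k = 2" | "3 \<le> k \<and> k \<le> n" | "n < k" by linarith
    then show "D (ee n 1) k = vadd (vadd (smul \<alpha>2 (ee n 1)) (smul (- \<alpha>1) (ee n 2)))
                      (\<lambda>k. \<Sum>i=3..n. \<beta> i * ee n i k) k"
    proof cases
      case 1 then show ?thesis using HD[of 1] b[of 1] n2 unfolding vadd_def smul_def sum_ee by (auto simp: ee_def bvec_app)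
    next
      case 2 then show ?thesis using HD[of 1] n2 unfolding vadd_def smul_def sum_ee by (auto simp: ee_def bvec_app \<alpha>2_def)
    next
      case 3 then show ?thesis using iD[of 2] HD[of 0] n2 unfolding vadd_def smul_def sum_ee by (auto simp: ee_def bvec_app \<alpha>1_def)
    next
      case 4 then show ?thesis using n2 unfolding vadd_def smul_def sum_ee by (auto simp: ee_def bvec_app \<beta>_def)
    next
      case 5 then show ?thesis using dcar[of 1 k] n2 unfolding vadd_def smul_def sum_ee by (auto simp: ee_def bvec_app)
    qed
  qed
  have P5: "\<forall>i\<in>{2..n}. D (ee n i) = (\<lambda>k. 0)"
  proof
    fix i assume i: "i \<in> {2..n}"
    show "D (ee n i) = (\<lambda>k. 0)"
    proof (rule ext)
      fix k
      consider "k = 0" | "k = 1" | "k = i" | "2 \<le> k \<and> k \<le> n \<and> k \<noteq> i" | "n < k" by linarith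
      then show "D (ee n i) k = 0"
      proof cases
        case 1 then show ?thesis using i HD[of i] b[of i] by (auto simp: ee_def)
      next
        case 2 then show ?thesis using i HD[of i] c[of i 1] by (auto simp: ee_def)
      next
        case 3 then show ?thesis using i kD[of i] by (auto simp: ee_def)
      next
        case 4 then show ?thesis using i hD[of i k] by (auto simp: ee_def)
      next
        case 5 then show ?thesis using i dcar[of i k] by (auto simp: ee_def)
      qed
    qed
  qed
  show ?thesis
    using P1 P2 P3 P4 P5 by blast
qed


theorem mainTheorem8:
  fixes n :: nat and d D :: "(nat \<Rightarrow> complex) \<Rightarrow> (nat \<Rightarrow> complex)"
  assumes "n \<ge> 2" and "linear_endo n d" and "linear_endo n D"
  shows "is_biderivation n d D \<longleftrightarrow>
    (\<exists>\<alpha>1 \<alpha>2 :: complex. \<exists>\<beta> :: nat \<Rightarrow> complex.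
       d hh = smul (- \<alpha>1) (ee n 1)
     \<and> (\<forall>i\<in>{1..n}. d (ee n i) = vadd (smul (of_nat i * \<alpha>2) (ee n i)) (smul \<alpha>1 (ee n (i + 1))))
     \<and> D hh = vadd (vadd (smul (- \<alpha>1) (ee n 1))
                      (\<lambda>k. \<Sum>i=2..n-1. of_nat i * \<beta> (i + 1) * ee n i k))
                (smul (\<beta> (n + 1)) (ee n n))
     \<and> D (ee n 1) = vadd (vadd (smul \<alpha>2 (ee n 1)) (smul (- \<alpha>1) (ee n 2)))
                      (\<lambda>k. \<Sum>i=3..n. \<beta> i * ee n i k)
     \<and> (\<forall>i\<in>{2..n}. D (ee n i) = (\<lambda>k. 0)))"
  using backward[OF assms] forward[OF assms(1)] by blast

end
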